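(* Let $f:\mathbb{R}^d\to\mathbb{R}^d$ be a homeomorphism with the forward topological shadowing property. Then $f$ satisfies the topological shadowing property.
   Context: $\mathbb{R}^d$ carries the Euclidean metric $d$; $\mathcal{C}^+=\{\epsilon:\mathbb{R}^d\to\mathbb{R}^+ : \epsilon \text{ continuous}\}$. For $\delta\in\mathcal{C}^+$, a sequence $\{x_n\}_{n\in\mathbb{Z}}$ is a $\delta$-pseudo-orbit of $f$ if $d(f(x_n),x_{n+1})<\delta(f(x_n))$ for every $n\in\mathbb{Z}$. The homeomorphism $f$ satisfies the topological shadowing property if for every $\epsilon\in\mathcal{C}^+$ there exists $\delta\in\mathcal{C}^+$ such that for every $\delta$-pseudo-orbit $\{x_n\}$ there is $y$ with $d(f^n(y),x_n)<\epsilon(x_n)$ for all $n\in\mathbb{Z}$. The homeomorphism $f$ satisfies the forward topological shadowing property if for every $\epsilon\in\mathcal{C}^+$ there exists $\delta\in\mathcal{C}^+$ such that for every $\delta$-pseudo-orbit $\{x_n\}_{n\in\mathbb{Z}}$ there exists $y\in\mathbb{R}^d$ with $d(f^n(y),x_n)\le\epsilon(x_n)$ for all $n\ge 0$. *)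

theory Defs
  imports "HOL-Analysis.Analysis"
begin

definition pos_cont :: "(real^'d \<Rightarrow> real) \<Rightarrow> bool" where
  "pos_cont e \<longleftrightarrow> continuous_on UNIV e \<and> (\<forall>x. e x > 0)"

definition iter_int :: "('a \<Rightarrow> 'a) \<Rightarrow> int \<Rightarrow> 'a \<Rightarrow> 'a" where
  "iter_int f n = (if 0 \<le> n then f ^^ nat n else inv f ^^ nat (- n))"

definition pseudo_orbit :: "(real^'d \<Rightarrow> real^'d) \<Rightarrow> (real^'d \<Rightarrow> real) \<Rightarrow> (int \<Rightarrow> real^'d) \<Rightarrow> bool" where
  "pseudo_orbit f \<delta> xs \<longleftrightarrow> (\<forall>n. dist (f (xs n)) (xs (n + 1)) < \<delta> (f (xs n)))"

definition topological_shadowing :: "(real^'d \<Rightarrow> real^'d) \<Rightarrow> bool" where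
  "topological_shadowing f \<longleftrightarrow>
     (\<forall>\<epsilon>. pos_cont \<epsilon> \<longrightarrow> (\<exists>\<delta>. pos_cont \<delta> \<and>
        (\<forall>xs. pseudo_orbit f \<delta> xs \<longrightarrow>
           (\<exists>y. \<forall>n::int. dist (iter_int f n y) (xs n) < \<epsilon> (xs n)))))"

definition forward_topological_shadowing :: "(real^'d \<Rightarrow> real^'d) \<Rightarrow> bool" where
  "forward_topological_shadowing f \<longleftrightarrow>
     (\<forall>\<epsilon>. pos_cont \<epsilon> \<longrightarrow> (\<exists>\<delta>. pos_cont \<delta> \<and>
        (\<forall>xs. pseudo_orbit f \<delta> xs \<longrightarrow>
           (\<exists>y. \<forall>n::int. n \<ge> 0 \<longrightarrow> dist (iter_int f n y) (xs n) \<le> \<epsilon> (xs n)))))"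

end

theory Submission
  imports Defs
begin

lemma iter_basic:
  assumes gf: "\<And>x. g (f x) = x" and fg: "\<And>y. f (g y) = y"
  shows "iter_int f n = (if 0 \<le> n then f ^^ nat n else g ^^ nat (- n))"
proof -
  have "inv f = g" using gf fg by (rule inv_equality)
  thus ?thesis unfolding iter_int_def by simp
qed

lemma iter_S1:
  assumes gf: "\<And>x. g (f x) = x" and fg: "\<And>y. f (g y) = y"
  shows "iter_int f (a + 1) x = f (iter_int f a x)"
proof (cases "0 \<le> a")
  case True
  then have "nat (a+1) = Suc (nat a)" by simp
  then show ?thesis using True by (simp add: iter_basic[OF gf fg])
next
  case False
  define j where "j = nat (- a - 1)"
  have j: "a = - int (Suc j)" using False by (simp add: j_def)
  have e1: "iter_int f (a+1) x = (g ^^ j) x"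
  proof -
    have "nat (- (a+1)) = j" using j by simp
    then show ?thesis using j by (cases j) (simp_all add: iter_basic[OF gf fg])
  qed
  have e2: "iter_int f a x = g ((g ^^ j) x)"
  proof -
    have "nat (- a) = Suc j" using j by simp
    then show ?thesis using False by (simp add: iter_basic[OF gf fg])
  qed
  show ?thesis using e1 e2 fg by simp
qed

lemma iter_S2:
  assumes gf: "\<And>x. g (f x) = x" and fg: "\<And>y. f (g y) = y"
  shows "iter_int f (a - 1) x = g (iter_int f a x)"
  using iter_S1[OF gf fg, of "a - 1" x] gf by simp

lemma iter_add:
  assumes gf: "\<And>x. g (f x) = x" and fg: "\<And>y. f (g y) = y"
  shows "iter_int f a (iter_int f b x) = iter_int f (a + b) x"
proof (induction a rule: int_induct[where k=0])
  case base
  then show ?case by (simp add: iter_basic[OF gf fg])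
next
  case (step1 i)
  then show ?case using iter_S1[OF gf fg, of i] iter_S1[OF gf fg, of "i+b"]
    by (simp add: algebra_simps)
next
  case (step2 i)
  then show ?case using iter_S2[OF gf fg, of i] iter_S2[OF gf fg, of "i+b"]
    by (simp add: algebra_simps)
qed

lemma funpow_cont:
  fixes h :: "'a::topological_space \<Rightarrow> 'a"
  assumes "continuous_on UNIV h"
  shows "continuous_on UNIV (h ^^ n)"
proof (induction n)
  case 0
  then show ?case by (simp add: continuous_on_id')
next
  case (Suc n)
  have "continuous_on UNIV (h \<circ> (h^^n))"
    by (rule continuous_on_compose[OF Suc.IH continuous_on_subset[OF assms subset_UNIV]])
  then show ?case by (simp only: funpow.simps)
qed

theorem mainTheorem6:
  fixes f g :: "real^'d \<Rightarrow> real^'d"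
  assumes "homeomorphism UNIV UNIV f g"
    and "forward_topological_shadowing f"
  shows "topological_shadowing f"
  unfolding topological_shadowing_def
proof (intro allI impI)
  have gf: "\<And>x. g (f x) = x" and fg: "\<And>y. f (g y) = y"
    and cf: "continuous_on UNIV f" and cg: "continuous_on UNIV g"
    using assms(1) unfolding homeomorphism_def by auto
  have citer: "continuous_on UNIV (iter_int f m)" for m
    using funpow_cont[OF cf] funpow_cont[OF cg] by (simp add: iter_basic[OF gf fg])
  fix \<epsilon> :: "real^'d \<Rightarrow> real" assume pe: "pos_cont \<epsilon>"
  define e2 where "e2 = (\<lambda>x. \<epsilon> x / 2)"
  have "pos_cont e2" using pe unfolding pos_cont_def e2_def
    by (auto intro: continuous_intros)
  then obtain \<delta> where pd: "pos_cont \<delta>" and sh: "\<And>xs. pseudo_orbit f \<delta> xs \<Longrightarrow>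
       (\<exists>y. \<forall>n::int. n \<ge> 0 \<longrightarrow> dist (iter_int f n y) (xs n) \<le> e2 (xs n))"
    using assms(2) unfolding forward_topological_shadowing_def by blast
  show "\<exists>\<delta>. pos_cont \<delta> \<and> (\<forall>xs. pseudo_orbit f \<delta> xs \<longrightarrow>
           (\<exists>y. \<forall>n::int. dist (iter_int f n y) (xs n) < \<epsilon> (xs n)))"
  proof (rule exI[of _ \<delta>], intro conjI allI impI)
    show "pos_cont \<delta>" by fact
    fix xs assume po: "pseudo_orbit f \<delta> xs"
    have "\<forall>k::nat. \<exists>y. \<forall>n::int. n \<ge> 0 \<longrightarrow> dist (iter_int f n y) (xs (n - int k)) \<le> e2 (xs (n - int k))"
    proof
      fix k :: nat
      have "pseudo_orbit f \<delta> (\<lambda>n. xs (n - int k))"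
        using po unfolding pseudo_orbit_def
        by (metis add.commute add_diff_eq)
      from sh[OF this] show "\<exists>y. \<forall>n::int. n \<ge> 0 \<longrightarrow> dist (iter_int f n y) (xs (n - int k)) \<le> e2 (xs (n - int k))" .
    qed
    then obtain Y where Y: "\<And>k n. n \<ge> 0 \<Longrightarrow> dist (iter_int f n (Y k)) (xs (n - int k)) \<le> e2 (xs (n - int k))"
      by metis
    define Z where "Z k = iter_int f (int k) (Y k)" for k
    have Zb: "dist (iter_int f m (Z k)) (xs m) \<le> e2 (xs m)" if "m + int k \<ge> 0" for m k
      using Y[of "m + int k" k] that unfolding Z_def iter_add[OF gf fg] by simp
    have "Z k \<in> cball (xs 0) (e2 (xs 0))" for k
      using Zb[of 0 k] by (simp add: iter_basic[OF gf fg] dist_commute)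
    moreover have "compact (cball (xs 0) (e2 (xs 0)))" by simp
    ultimately obtain l r where r: "strict_mono r" and lim: "(Z \<circ> r) \<longlonglongrightarrow> l"
      unfolding compact_def seq_compact_def by blast
    show "\<exists>y. \<forall>n::int. dist (iter_int f n y) (xs n) < \<epsilon> (xs n)"
    proof (rule exI[of _ l], intro allI)
      fix m :: int
      have "(\<lambda>n. iter_int f m (Z (r n))) \<longlonglongrightarrow> iter_int f m l"
        using lim citer[of m]
        using continuous_on_tendsto_compose[OF citer[of m] lim] by (simp add: o_def)
      then have t: "(\<lambda>n. dist (iter_int f m (Z (r n))) (xs m)) \<longlonglongrightarrow> dist (iter_int f m l) (xs m)"
        by (intro tendsto_intros)
      have "\<exists>N. \<forall>n\<ge>N. dist (iter_int f m (Z (r n))) (xs m) \<le> e2 (xs m)"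
      proof (intro exI allI impI)
        fix n assume "nat (- m) \<le> n"
        moreover have "n \<le> r n" using r by (simp add: strict_mono_imp_increasing)
        ultimately have "m + int (r n) \<ge> 0" by linarith
        then show "dist (iter_int f m (Z (r n))) (xs m) \<le> e2 (xs m)" by (rule Zb)
      qed
      from LIMSEQ_le_const2[OF t this] have "dist (iter_int f m l) (xs m) \<le> e2 (xs m)" .
      moreover have "\<epsilon> (xs m) > 0" using pe unfolding pos_cont_def by auto
      ultimately show "dist (iter_int f m l) (xs m) < \<epsilon> (xs m)" unfolding e2_def by simp
    qed
  qed
qed

end
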